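(* Fix $\alpha\in(0,\pi/4]$ and let ALG be any deterministic online algorithm. Then $\rho(\mathrm{ALG};\alpha)\ge\rho^*$, where $$\rho^*=\frac{s^*(1+s^* )\sqrt{1-\cos(4\alpha)}}{\sqrt{2(1+(s^* )^4)-4(s^* )^2\cos(4\alpha)}},$$ $$s^*=-\tfrac12\cos(4\alpha)+\tfrac12\sqrt{\cos^2(4\alpha)-\frac{8\sqrt[3]{2}\sin^2(2\alpha)}{h}+\frac{h}{3\sqrt[3]{2}}}+\tfrac12\sqrt{2\cos^2(4\alpha)+\frac{8\sqrt[3]{2}\sin^2(2\alpha)}{h}+\frac{16-8\cos^3(4\alpha)}{4\sqrt{\cos^2(4\alpha)-\frac{8\sqrt[3]{2}\sin^2(2\alpha)}{h}+\frac{h}{3\sqrt[3]{2}}}}-\frac{h}{3\sqrt[3]{2}}},$$ $$h=\sqrt[3]{-108\cos^2(4\alpha)+\sqrt{(108-108\cos^2(4\alpha))^2-4(12\cos(4\alpha)-12)^3}+108}.$$ In particular, ALG cannot obtain a ratio better than $\rho^*$ on all prefixes of the request sequence $X_0=(0,0)$, $X_i=(2(-s)^{i-1},0)$ ($i\ge1$) with $s=s^*$.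
   Context: Online drone coverage on a line. A drone has a fixed half angle-of-view $\alpha\in(0,\pi/2)$. A drone at a point $T=(t_x,t_y)$ with $t_y\ge 0$ covers the segment $[t_x-t_y\tan\alpha,\ t_x+t_y\tan\alpha]$ of the $x$-axis. For a point $X=(x,0)$ its feasibility cone is $\mathrm{FC}(X)=\{(u,v): v\ge 0,\ |u-x|\le v\tan\alpha\}$, and the feasibility cone of a finite set of points is the intersection of their cones. An input is a finite sequence of points $X_0=(0,0),X_1,\dots,X_n$ ($n\ge1$) on the $x$-axis, revealed one at a time. A solution is a sequence of drone positions $P_0=(0,0),P_1,\dots,P_n$ with $P_i\in\mathrm{FC}(X_0,\dots,X_i)$; its cost is $\sum_{i=0}^{n-1}|P_iP_{i+1}|$. A deterministic online algorithm chooses $P_i$ knowing only $X_0,\dots,X_i$ (it does not know $n$). $\mathrm{OPT}(\mathbf X;\alpha)$ is the minimum cost of a solution when the whole input is known in advance. The competitive ratio $\rho(\mathrm{ALG};\alpha)$ is the supremum over inputs of $\mathrm{ALG}(\mathbf X;\alpha)/\mathrm{OPT}(\mathbf X;\alpha)$. *)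

theory Defs
  imports Complex_Main "HOL-Library.Extended_Real"
begin

text \<open>Points of the plane are pairs (x,y); points on the x-axis are given by their x-coordinate.\<close>

definition edist :: "real \<times> real \<Rightarrow> real \<times> real \<Rightarrow> real" where
  "edist p q = sqrt ((fst p - fst q)^2 + (snd p - snd q)^2)"

definition FC :: "real \<Rightarrow> real \<Rightarrow> (real \<times> real) set" where
  "FC \<alpha> x = {(u, v). v \<ge> 0 \<and> \<bar>u - x\<bar> \<le> v * tan \<alpha>}"

definition FCs :: "real \<Rightarrow> real set \<Rightarrow> (real \<times> real) set" where
  "FCs \<alpha> S = (\<Inter>x\<in>S. FC \<alpha> x)"

definition path_cost :: "(nat \<Rightarrow> real \<times> real) \<Rightarrow> nat \<Rightarrow> real" where
  "path_cost P n = (\<Sum>i<n. edist (P i) (P (Suc i)))"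

text \<open>An input X_0 = (0,0), X_1, ..., X_n (n \<ge> 1), as the list of x-coordinates.\<close>
definition is_input :: "real list \<Rightarrow> bool" where
  "is_input xs \<longleftrightarrow> length xs \<ge> 2 \<and> xs ! 0 = 0"

definition is_solution :: "real \<Rightarrow> real list \<Rightarrow> (nat \<Rightarrow> real \<times> real) \<Rightarrow> bool" where
  "is_solution \<alpha> xs P \<longleftrightarrow> P 0 = (0, 0) \<and>
     (\<forall>i < length xs. P i \<in> FCs \<alpha> (set (take (Suc i) xs)))"

definition OPT :: "real \<Rightarrow> real list \<Rightarrow> real" where
  "OPT \<alpha> xs = Inf {path_cost P (length xs - 1) | P. is_solution \<alpha> xs P}"

text \<open>A deterministic online algorithm maps the revealed prefix X_0..X_i (i \<ge> 1)
  to the drone position P_i; P_0 = (0,0) is fixed. It must be feasible.\<close>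
definition online_alg :: "real \<Rightarrow> (real list \<Rightarrow> real \<times> real) \<Rightarrow> bool" where
  "online_alg \<alpha> A \<longleftrightarrow> (\<forall>xs. is_input xs \<longrightarrow> A xs \<in> FCs \<alpha> (set xs))"

definition alg_pos :: "(real list \<Rightarrow> real \<times> real) \<Rightarrow> real list \<Rightarrow> nat \<Rightarrow> real \<times> real" where
  "alg_pos A xs i = (if i = 0 then (0, 0) else A (take (Suc i) xs))"

definition ALG_cost :: "(real list \<Rightarrow> real \<times> real) \<Rightarrow> real list \<Rightarrow> real" where
  "ALG_cost A xs = path_cost (alg_pos A xs) (length xs - 1)"

definition cratio :: "real \<Rightarrow> real \<Rightarrow> ereal" where
  "cratio a b = (if b > 0 then ereal (a / b) else if a > 0 then \<infinity> else 0)"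

definition comp_ratio :: "(real list \<Rightarrow> real \<times> real) \<Rightarrow> real \<Rightarrow> ereal" where
  "comp_ratio A \<alpha> = (SUP xs \<in> {xs. is_input xs}. cratio (ALG_cost A xs) (OPT \<alpha> xs))"

definition adv_seq :: "real \<Rightarrow> nat \<Rightarrow> real list" where
  "adv_seq s n = map (\<lambda>i. if i = 0 then 0 else 2 * (-s) ^ (i - 1)) [0..<Suc n]"

definition h_const :: "real \<Rightarrow> real" where
  "h_const \<alpha> = root 3 (- 108 * (cos (4*\<alpha>))^2
      + sqrt ((108 - 108 * (cos (4*\<alpha>))^2)^2 - 4 * (12 * cos (4*\<alpha>) - 12)^3) + 108)"

definition s_star :: "real \<Rightarrow> real" where
  "s_star \<alpha> = (let c = cos (4*\<alpha>); h = h_const \<alpha>; r = root 3 2;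
      w = sqrt (c^2 - 8 * r * (sin (2*\<alpha>))^2 / h + h / (3 * r))
    in - c / 2 + w / 2
       + sqrt (2 * c^2 + 8 * r * (sin (2*\<alpha>))^2 / h + (16 - 8 * c^3) / (4 * w) - h / (3 * r)) / 2)"

definition rho_star :: "real \<Rightarrow> real" where
  "rho_star \<alpha> = (let s = s_star \<alpha>; c = cos (4*\<alpha>) in
      s * (1 + s) * sqrt (1 - c) / sqrt (2 * (1 + s^4) - 4 * s^2 * c))"

end

theory Submission
  imports Defs
begin


lemma neg1_sq: "((-1::real)^k)^2 = 1"
  by (simp add: power2_eq_square power_mult_distrib[symmetric])

lemma cs_ineq:
  fixes a b x y :: real
  shows "a*x + b*y \<le> sqrt (a^2+b^2) * sqrt (x^2+y^2)"
proof -
  have e: "(a^2+b^2)*(x^2+y^2) = (a*x+b*y)^2 + (a*y - b*x)^2" by (simp add: power2_eq_square algebra_simps)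
  have "(a*x+b*y)^2 \<le> (a^2+b^2)*(x^2+y^2)" unfolding e by simp
  hence "a*x+b*y \<le> sqrt ((a^2+b^2)*(x^2+y^2))"
    by (meson real_le_rsqrt)
  thus ?thesis by (simp add: real_sqrt_mult)
qed

primrec Tseq :: "real \<Rightarrow> (nat \<Rightarrow> real) \<Rightarrow> nat \<Rightarrow> real" where
  "Tseq s d 0 = 0"
| "Tseq s d (Suc N) = s * Tseq s d N + d (Suc N)"

lemma certificate:
  fixes s t \<rho> K :: real and u v d :: "nat \<Rightarrow> real"
  assumes s1: "s > 1" and t0: "t > 0" and K0: "K > 0"
  and C1: "\<And>j. (-1)^j * u (Suc j) + t * v (Suc j) \<ge> 2 * s^j"
  and C2: "\<And>j. (-1)^j * u (Suc j) \<le> t * v (Suc j)"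
  and u0: "u 0 = 0" and v0: "v 0 = 0"
  and d_def: "\<And>n. d n = (\<Sum>i<n. sqrt ((u i - u (Suc i))^2 + (v i - v (Suc i))^2))"
  and bound: "\<And>m. d (m+2) \<le> \<rho> * s^m * K"
  shows "2 * s * (s+1) \<le> \<rho> * sqrt ((s-1)^2 + t^2*(s+1)^2) * K"
proof (rule ccontr)
  assume neg: "\<not> ?thesis"
  define D1 where "D1 = (s-1)^2 + t^2*(s+1)^2"
  define E where "E = \<rho> * sqrt D1 * K"
  have E_lt: "E < 2*s*(s+1)" using neg unfolding E_def D1_def by simp
  define x where "x j = (-1)^j * u (Suc j)" for j
  define y where "y j = t * v (Suc j)" for j
  define S where "S N = (s-1) * x N + (s+1) * y N + 2*(s-1) * (\<Sum>j<N. x j)" for N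
  define G where "G N = (\<Sum>j<N. ((s+1)*s^N/s^(j+1) - 2) * x j + (s+1)*(s^N/s^(j+1)) * y j)" for N
  have s0: "s > 0" using s1 by simp
  have dsuc: "d (Suc n) = d n + sqrt ((u n - u (Suc n))^2 + (v n - v (Suc n))^2)" for n
    by (simp add: d_def)
  have L1: "S N \<le> sqrt D1 * d (Suc N)" for N
  proof (induction N)
    case 0
    have "S 0 = (s-1) * u 1 + ((s+1)*t) * v 1" by (simp add: S_def x_def y_def)
    also have "\<dots> \<le> sqrt ((s-1)^2 + ((s+1)*t)^2) * sqrt ((u 1)^2 + (v 1)^2)" by (rule cs_ineq)
    also have "\<dots> = sqrt D1 * d 1" by (simp add: D1_def d_def u0 v0 power_mult_distrib mult.commute)
    finally show ?case by simp
  next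
    case (Suc N)
    have "S (Suc N) - S N = ((-1)^(Suc N) * (s-1)) * (u (Suc (Suc N)) - u (Suc N)) + ((s+1)*t) * (v (Suc (Suc N)) - v (Suc N))"
      by (simp add: S_def x_def y_def algebra_simps)
    also have "\<dots> \<le> sqrt (((-1)^(Suc N) * (s-1))^2 + ((s+1)*t)^2) * sqrt ((u (Suc (Suc N)) - u (Suc N))^2 + (v (Suc (Suc N)) - v (Suc N))^2)"
      by (rule cs_ineq)
    also have "\<dots> = sqrt D1 * sqrt ((u (Suc N) - u (Suc (Suc N)))^2 + (v (Suc N) - v (Suc (Suc N)))^2)"
      by (simp add: D1_def power_mult_distrib mult.commute power2_commute neg1_sq)
    finally show ?case using Suc.IH dsuc[of "Suc N"] by (simp add: algebra_simps)
  qed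
  have Grec: "G (Suc N) = s * G N + S N" for N
  proof -
    have "G (Suc N) = (\<Sum>j<N. ((s+1)*s^(Suc N)/s^(j+1) - 2) * x j + (s+1)*(s^(Suc N)/s^(j+1)) * y j)
        + ((s-1) * x N + (s+1) * y N)"
      using s0 by (simp add: G_def)
    also have "(\<Sum>j<N. ((s+1)*s^(Suc N)/s^(j+1) - 2) * x j + (s+1)*(s^(Suc N)/s^(j+1)) * y j)
       = (\<Sum>j<N. s * (((s+1)*s^N/s^(j+1) - 2) * x j + (s+1)*(s^N/s^(j+1)) * y j) + 2*(s-1) * x j)"
      using s0 by (intro sum.cong) (auto simp: field_simps)
    also have "\<dots> = s * G N + 2*(s-1) * (\<Sum>j<N. x j)"
      by (simp only: G_def sum.distrib sum_distrib_left[symmetric] mult.assoc)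
    finally show ?thesis by (simp add: S_def algebra_simps)
  qed
  have L2: "G N \<le> sqrt D1 * Tseq s d N" for N
  proof (induction N)
    case 0 show ?case by (simp add: G_def)
  next
    case (Suc N)
    have "s * G N \<le> s * (sqrt D1 * Tseq s d N)" using Suc.IH s0 by simp
    thus ?case using Grec[of N] L1[of N] by (simp add: algebra_simps)
  qed
  have L3: "G N \<ge> 2 * real N * (s+1) * s^N / s - 2 * (\<Sum>j<N. s^j)" for N
  proof -
    have "((s+1)*s^N/s^(j+1) - 2) * x j + (s+1)*(s^N/s^(j+1)) * y j \<ge> 2*(s+1)*s^N/s - 2 * s^j"
      if "j < N" for j
    proof -
      define B where "B = (s+1)*s^N/s^(j+1)"
      have "s^(j+1) \<le> s^N" using that s1 by (intro power_increasing) auto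
      hence "s^N/s^(j+1) \<ge> 1" using s0 by simp
      hence "(s+1)*(s^N/s^(j+1)) \<ge> 1*1" using s0 by (intro mult_mono) auto
      hence B1: "B \<ge> 1" unfolding B_def by simp
      have e: "((s+1)*s^N/s^(j+1) - 2) * x j + (s+1)*(s^N/s^(j+1)) * y j = (B - 1) * (x j + y j) + (y j - x j)"
        unfolding B_def using s0 by (simp add: field_simps)
      have "(B-1) * (x j + y j) \<ge> (B-1) * (2*s^j)"
        using C1[of j] B1 unfolding x_def y_def by (intro mult_left_mono) auto
      moreover have "y j - x j \<ge> 0" using C2[of j] unfolding x_def y_def by simp
      moreover have "(B-1)*(2*s^j) = 2*(s+1)*s^N/s - 2 * s^j"
        unfolding B_def using s0 by (simp add: field_simps)
      ultimately show ?thesis using e by linarith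
    qed
    hence "(\<Sum>j<N. 2*(s+1)*s^N/s - 2 * s^j) \<le> G N"
      unfolding G_def by (intro sum_mono) auto
    moreover have "real N * ((2 * s + 2) * s ^ N) / s = 2 * real N * (s + 1) * s ^ N / s"
      by (simp add: algebra_simps)
    ultimately show ?thesis by (simp add: sum_subtractf sum_distrib_left)
  qed
  have geo: "(\<Sum>j<N. s^j) \<le> s^N / (s-1)" for N
  proof -
    have "(\<Sum>j<N. s^j) = (s^N - 1)/(s-1)" using s1 by (simp add: sum_gp_strict field_simps)
    thus ?thesis using s1 by (simp add: divide_right_mono)
  qed
  have L4: "s^2 * Tseq s d N \<le> \<rho> * K * (s^(N+1) + (real N - 1) * s^N)" if "N \<ge> 1" for N
    using that
  proof (induction N rule: dec_induct)
    case base
    have "d 1 \<le> d 2" using dsuc[of 1] by (simp add: numeral_2_eq_2)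
    also have "\<dots> \<le> \<rho> * K" using bound[of 0] by (simp add: numeral_2_eq_2)
    finally have "d 1 \<le> \<rho> * K" .
    hence "s^2 * d 1 \<le> s^2 * (\<rho> * K)" using s0 by simp
    thus ?case by (simp add: algebra_simps power2_eq_square)
  next
    case (step N)
    obtain m where m: "N = Suc m" using step.hyps by (cases N) auto
    have dN: "d (Suc N) \<le> \<rho> * s^(N-1) * K" using bound[of "N-1"] m by simp
    have "s^2 * Tseq s d (Suc N) = s * (s^2 * Tseq s d N) + s^2 * d (Suc N)" by (simp add: algebra_simps)
    also have "\<dots> \<le> s * (\<rho> * K * (s^(N+1) + (real N - 1) * s^N)) + s^2 * (\<rho> * s^(N-1) * K)"
      using step.IH dN s0 by (intro add_mono mult_left_mono) auto
    also have "\<dots> = \<rho> * K * (s^(Suc N+1) + (real (Suc N) - 1) * s^(Suc N))"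
      using m by (simp add: algebra_simps power2_eq_square)
    finally show ?case .
  qed
  have key: "real N * (2*s*(s+1) - E) \<le> 2*s^2/(s-1) + E*(s-1)" if "N \<ge> 1" for N
  proof -
    have "2 * real N * (s+1) * s^N / s - 2 * (s^N/(s-1)) \<le> sqrt D1 * Tseq s d N"
      using L2[of N] L3[of N] geo[of N] by linarith
    hence "s^2 * (2 * real N * (s+1) * s^N / s - 2 * (s^N/(s-1))) \<le> s^2 * (sqrt D1 * Tseq s d N)"
      by (rule mult_left_mono) simp
    also have "\<dots> = sqrt D1 * (s^2 * Tseq s d N)" by simp
    also have "\<dots> \<le> sqrt D1 * (\<rho> * K * (s^(N+1) + (real N - 1) * s^N))"
      using L4[OF that] by (intro mult_left_mono) (auto simp: D1_def)
    finally have ch: "s^2 * (2 * real N * (s+1) * s^N / s - 2 * (s^N/(s-1))) \<le> sqrt D1 * (\<rho> * K * (s^(N+1) + (real N - 1) * s^N))" .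
    have eq1: "s^2 * (2 * real N * (s+1) * s^N / s - 2 * (s^N/(s-1))) = s^N * (2 * real N * (s+1) * s - 2 * s^2/(s-1))"
      using s0 s1 by (simp add: field_simps power2_eq_square)
    have eq2: "sqrt D1 * (\<rho> * K * (s^(N+1) + (real N - 1) * s^N)) = s^N * (E * (s + real N - 1))"
      unfolding E_def by (simp add: algebra_simps)
    have "s^N * (2 * real N * (s+1) * s - 2 * s^2/(s-1)) \<le> s^N * (E * (s + real N - 1))"
      using ch eq1 eq2 by simp
    hence "2 * real N * (s+1) * s - 2 * s^2/(s-1) \<le> E * (s + real N - 1)"
      using s0 by (simp add: mult_le_cancel_left_pos)
    thus ?thesis by (simp add: algebra_simps)
  qed
  define \<delta> where "\<delta> = 2*s*(s+1) - E"
  have d0: "\<delta> > 0" using E_lt by (simp add: \<delta>_def)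
  obtain N :: nat where N: "(2*s^2/(s-1) + E*(s-1)) / \<delta> < real N" using reals_Archimedean2 by blast
  have "real (Suc N) * \<delta> \<le> 2*s^2/(s-1) + E*(s-1)" using key[of "Suc N"] by (simp add: \<delta>_def)
  moreover have "2*s^2/(s-1) + E*(s-1) < real N * \<delta>" using N d0 by (simp add: field_simps)
  ultimately show False using d0 by (simp add: algebra_simps)
qed



lemma trig_facts:
  assumes a0: "0 < \<alpha>" and a1: "\<alpha> \<le> pi/4"
  shows "tan \<alpha> > 0" "cos (4*\<alpha>) = 1 - 8*(tan \<alpha>)^2/(1+(tan \<alpha>)^2)^2"
    "(sin (2*\<alpha>))^2 = (1 - cos (4*\<alpha>))/2" "cos (4*\<alpha>) < 1" "-1 \<le> cos (4*\<alpha>)"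
proof -
  have cpos: "cos \<alpha> > 0" using a0 a1 by (intro cos_gt_zero_pi) auto
  show "tan \<alpha> > 0" using a0 a1 by (intro tan_gt_zero) auto
  have c4: "cos (4*\<alpha>) = 1 - 2 * (sin (2*\<alpha>))^2"
    using cos_double_sin[of "2*\<alpha>"] by simp
  thus "(sin (2*\<alpha>))^2 = (1 - cos (4*\<alpha>))/2" by simp
  define t where "t = tan \<alpha>"
  have st: "sin \<alpha> = t * cos \<alpha>" using cpos by (simp add: t_def tan_def)
  have cc: "(cos \<alpha>)^2 * (1 + t^2) = 1"
    using sin_cos_squared_add[of \<alpha>] st by (simp add: power_mult_distrib algebra_simps)
  have s2: "sin (2*\<alpha>) = 2*t*(cos \<alpha>)^2" by (simp add: sin_double st power2_eq_square)
  have "(sin (2*\<alpha>))^2 = 4 * t^2 * ((cos \<alpha>)^2)^2"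
    unfolding s2 by (simp add: power_mult_distrib)
  also have "(cos \<alpha>)^2 = 1/(1+t^2)"
  proof -
    have "1 + t^2 > 0" by (simp add: add_pos_nonneg)
    thus ?thesis using cc by (simp add: eq_divide_eq)
  qed
  finally have "(sin (2*\<alpha>))^2 = 4*t^2/(1+t^2)^2" by (simp add: power_divide)
  thus "cos (4*\<alpha>) = 1 - 8*(tan \<alpha>)^2/(1+(tan \<alpha>)^2)^2" using c4 by (simp add: t_def)
  have "cos (4*\<alpha>) < cos 0" using a0 a1 by (intro cos_monotone_0_pi) auto
  thus "cos (4*\<alpha>) < 1" by simp
  show "-1 \<le> cos (4*\<alpha>)" by simp
qed

lemma s_star_ge:
  assumes a0: "0 < \<alpha>" and a1: "\<alpha> \<le> pi/4"
  shows "s_star \<alpha> \<ge> -1"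
proof -
  define c where "c = cos (4*\<alpha>)"
  define e where "e = 1 - c"
  have e0: "e > 0" using trig_facts(4)[OF a0 a1] by (simp add: e_def c_def)
  have e2: "e \<le> 2" using trig_facts(5)[OF a0 a1] by (simp add: e_def c_def)
  have "(1-c)*(1+c) \<ge> 0" using e0 e2 unfolding e_def by (intro mult_nonneg_nonneg) auto
  hence c1: "c^2 \<le> 1" by (simp add: power2_eq_square algebra_simps)
  have sn: "(sin (2*\<alpha>))^2 = e/2" using trig_facts(3)[OF a0 a1] by (simp add: e_def c_def)
  define Z where "Z = (108 - 108 * c^2)^2 - 4 * (12 * c - 12)^3"
  have Zeq: "Z = 108^2 * (1-c^2)^2 + 6912 * e^3" unfolding Z_def e_def by (simp add: power2_eq_square power3_eq_cube algebra_simps)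
  have Z0: "Z > 0" unfolding Zeq using e0 by (simp add: add_nonneg_pos)
  define X where "X = - 108 * c^2 + sqrt Z + 108"
  have "sqrt Z > 0" using Z0 by simp
  hence X0: "X > 0" unfolding X_def using c1 by linarith
  define h where "h = h_const \<alpha>"
  have hX: "h = root 3 X" unfolding h_def h_const_def X_def Z_def c_def by simp
  have h0: "h > 0" unfolding hX using X0 by simp
  have h3: "h^3 = X" unfolding hX using X0 by simp
  define r where "r = root 3 (2::real)"
  have r0: "r > 0" unfolding r_def by simp
  have r3: "r^3 = 2" unfolding r_def by simp
  define p where "p = h / (3*r)"
  have p0: "p > 0" unfolding p_def using h0 r0 by simp
  have p3: "p^3 = X/54" unfolding p_def using h3 r3 by (simp add: power_divide power_mult_distrib)
  define A where "A = 2*(1-c^2)"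
  define B where "B = sqrt Z / 54"
  have A0: "A \<ge> 0" unfolding A_def using c1 by simp
  have pAB: "p^3 = A + B" unfolding p3 A_def B_def X_def by simp
  define q where "q = 4*e/3"
  have B2: "B^2 = A^2 + q^3" unfolding B_def A_def q_def using Z0 Zeq by (simp add: power_divide power2_eq_square power3_eq_cube algebra_simps)
  define Y where "Y = p - q/p"
  have cub0: "Y^3 + 3*q*Y = (p^6 - q^3)/p^3" unfolding Y_def using p0
    by (simp add: field_simps power2_eq_square power3_eq_cube eval_nat_numeral)
  have q3: "q^3 = p^6 - 2*A*p^3"
  proof -
    have "q^3 = B^2 - A^2" using B2 by simp
    also have "B = p^3 - A" using pAB by simp
    finally show ?thesis by (simp add: power2_eq_square eval_nat_numeral algebra_simps)
  qed
  have cub: "Y^3 + 4*e*Y = 4*e*(2-e)"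
  proof -
    have "Y^3 + 3*q*Y = 2*A" unfolding cub0 q3 using p0 by (simp add: field_simps eval_nat_numeral)
    thus ?thesis unfolding q_def A_def e_def by (simp add: field_simps power2_eq_square)
  qed
  have Y0: "Y \<ge> 0"
  proof (rule ccontr)
    assume "\<not> Y \<ge> 0"
    hence "Y < 0" by simp
    hence "Y^3 < 0" "4*e*Y < 0" using e0 by (auto simp: power3_eq_cube mult_pos_neg mult_neg_neg)
    moreover have "4*e*(2-e) \<ge> 0" using e0 e2 by simp
    ultimately show False using cub by linarith
  qed
  have Y1: "Y \<le> 1"
  proof (rule ccontr)
    assume "\<not> Y \<le> 1"
    hence Yg: "Y > 1" by simp
    hence "Y^3 > 1" by (simp add: one_less_power)
    moreover have "4*e*Y \<ge> 4*e" using Yg e0 by simp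
    moreover have "4*e*(2-e) \<le> 1 + 4*e" using zero_le_power2[of "1 - 2*e"] by (simp add: power2_eq_square algebra_simps)
    ultimately show False using cub by linarith
  qed
  have W: "c^2 - 8 * r * (sin (2*\<alpha>))^2 / h + h / (3 * r) = c^2 + Y"
    unfolding sn Y_def p_def q_def using h0 r0 by (simp add: field_simps)
  define w where "w = sqrt (c^2 + Y)"
  have w0: "w \<ge> 0" unfolding w_def using Y0 by simp
  have QQ: "2 * c^2 + 8 * r * (sin (2*\<alpha>))^2 / h + (16 - 8 * c^3) / (4 * w) - h / (3 * r)
      = 2*c^2 - Y + (16 - 8 * c^3) / (4 * w)"
    unfolding sn Y_def p_def q_def using h0 r0 by (simp add: field_simps)
  have c3: "c^3 \<le> 1"
  proof -
    have "\<bar>c\<bar> \<le> 1" using e0 e2 unfolding e_def by auto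
    hence "\<bar>c\<bar>^3 \<le> 1" by (simp add: power_le_one)
    moreover have "c^3 \<le> \<bar>c^3\<bar>" by simp
    moreover have "\<bar>c^3\<bar> = \<bar>c\<bar>^3" by (simp add: power_abs)
    ultimately show ?thesis by linarith
  qed
  have fr: "(16 - 8 * c^3) / (4 * w) \<ge> 0" using c3 w0 by simp
  define Q where "Q = 2*c^2 - Y + (16 - 8 * c^3) / (4 * w)"
  have "c^2 \<ge> 0" by simp
  hence Qm: "Q \<ge> -1" unfolding Q_def using fr Y1 by linarith
  have sQ: "sqrt Q \<ge> -1"
  proof (cases "Q \<ge> 0")
    case True
    hence "sqrt Q \<ge> 0" by simp
    thus ?thesis by linarith
  next
    case False
    hence "sqrt (-Q) \<le> 1" using Qm by (simp add: real_sqrt_le_1_iff)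
    thus ?thesis by (simp add: real_sqrt_minus)
  qed
  have ss: "s_star \<alpha> = - c / 2 + sqrt (c^2 - 8 * r * (sin (2*\<alpha>))^2 / h + h / (3 * r)) / 2
       + sqrt (2 * c^2 + 8 * r * (sin (2*\<alpha>))^2 / h + (16 - 8 * c^3) / (4 * sqrt (c^2 - 8 * r * (sin (2*\<alpha>))^2 / h + h / (3 * r))) - h / (3 * r)) / 2"
    by (simp add: s_star_def Let_def h_def r_def c_def)
  have "s_star \<alpha> = - c / 2 + w / 2 + sqrt Q / 2"
    unfolding ss W w_def[symmetric] QQ Q_def by simp
  moreover have "c \<le> 1" using e0 e_def by simp
  ultimately show ?thesis using w0 sQ by linarith
qed



lemma rho_le1:
  fixes s c :: real
  assumes "-1 \<le> s" "s \<le> 1" "-1 \<le> c" "c \<le> 1"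
  shows "s*(1+s)*sqrt(1-c)/sqrt(2*(1+s^4) - 4*s^2*c) \<le> 1"
proof -
  define Dn where "Dn = 2*(1+s^4) - 4*s^2*c"
  have Dn_eq: "Dn = 2*(1-s^2)^2 + 4*s^2*(1-c)" unfolding Dn_def by (simp add: power2_eq_square algebra_simps eval_nat_numeral)
  have Dn0: "Dn \<ge> 0" unfolding Dn_eq using assms by (simp add: add_nonneg_nonneg)
  have le: "s*(1+s)*sqrt(1-c) \<le> sqrt Dn"
  proof (cases "s*(1+s) \<le> 0")
    case True
    hence "s*(1+s)*sqrt(1-c) \<le> 0" using assms by (simp add: mult_nonpos_nonneg)
    moreover have "sqrt Dn \<ge> 0" using Dn0 by simp
    ultimately show ?thesis by linarith
  next
    case False
    have s0: "s > 0"
    proof (rule ccontr)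
      assume "\<not> s > 0"
      hence "s*(1+s) \<le> 0" using assms by (intro mult_nonpos_nonneg) auto
      thus False using False by simp
    qed
    have sq: "(s*(1+s)*sqrt(1-c))^2 = s^2*(1+s)^2*(1-c)" using assms by (simp add: power_mult_distrib)
    have "(1+s)^2 \<le> 2^2" using assms s0 by (intro power_mono) auto
    hence "(1+s)^2 \<le> 4" by simp
    hence "s^2*(1-c)*((1+s)^2) \<le> s^2*(1-c)*4" using assms by (intro mult_left_mono) auto
    moreover have "s^2*(1+s)^2*(1-c) = s^2*(1-c)*((1+s)^2)" by simp
    moreover have "2*(1-s^2)^2 \<ge> 0" by simp
    ultimately have "(s*(1+s)*sqrt(1-c))^2 \<le> Dn" unfolding sq Dn_eq by linarith
    thus ?thesis by (simp add: real_le_rsqrt)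
  qed
  show ?thesis
  proof (cases "sqrt Dn = 0")
    case True thus ?thesis unfolding Dn_def by simp
  next
    case False
    hence "sqrt Dn > 0" using Dn0 by simp
    thus ?thesis using le unfolding Dn_def by simp
  qed
qed

lemma rho_eq:
  fixes s c t :: real
  assumes s1: "s > 1" and t0: "t > 0" and c: "c = 1 - 8*t^2/(1+t^2)^2"
  shows "s*(1+s)*sqrt(1-c)/sqrt(2*(1+s^4) - 4*s^2*c)
       = 2*s*(s+1)/(sqrt ((s-1)^2 + t^2*(s+1)^2) * sqrt ((s-1)^2 + ((s+1)/t)^2))"
proof -
  define D1 where "D1 = (s-1)^2 + t^2*(s+1)^2"
  define K2 where "K2 = (s-1)^2 + ((s+1)/t)^2"
  define Dn where "Dn = 2*(1+s^4) - 4*s^2*c"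
  have T0: "1 + t^2 > 0" by (simp add: add_pos_nonneg)
  define T where "T = 1 + t^2"
  define D2 where "D2 = (s+1)^2 + t^2*(s-1)^2"
  have K2e: "K2 = D2 / t^2" unfolding K2_def D2_def using t0 by (simp add: field_simps power2_eq_square)
  have ce: "1 - c = 8*t^2/T^2" unfolding c T_def by simp
  have ring: "D1*D2 = (s^2-1)^2*T^2 + 16*s^2*t^2" unfolding D1_def D2_def T_def by (simp add: power2_eq_square algebra_simps)
  have Dne: "4*Dn = 8*(s^2-1)^2 + 16*s^2*(1-c)" unfolding Dn_def by (simp add: power2_eq_square algebra_simps eval_nat_numeral)
  have T0': "T > 0" unfolding T_def using T0 .
  have id: "(1-c)*D1*K2 = 4*Dn"
  proof -
    have "(1-c)*D1*K2 = 8*(D1*D2)/T^2" unfolding ce K2e using t0 by (simp add: field_simps)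
    also have "\<dots> = 8*(s^2-1)^2 + 128*s^2*t^2/T^2" unfolding ring using T0' by (simp add: field_simps)
    also have "\<dots> = 4*Dn" unfolding Dne ce by (simp add: field_simps)
    finally show ?thesis .
  qed
  have c1: "1 - c > 0" unfolding ce using t0 T0' by simp
  have D10: "D1 > 0" unfolding D1_def using s1 t0 by (simp add: add_pos_nonneg)
  have K20: "K2 > 0" unfolding K2_def using s1 by (simp add: add_pos_nonneg)
  have "sqrt (1-c) * sqrt D1 * sqrt K2 = 2 * sqrt Dn"
  proof -
    have "sqrt (1-c) * sqrt D1 * sqrt K2 = sqrt (4*Dn)" by (simp add: real_sqrt_mult[symmetric] id)
    also have "\<dots> = 2 * sqrt Dn" by (simp add: real_sqrt_mult)
    finally show ?thesis .
  qed
  hence e: "sqrt Dn = sqrt (1-c) * sqrt D1 * sqrt K2 / 2" by simp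
  have p1: "sqrt (1-c) > 0" "sqrt D1 > 0" "sqrt K2 > 0" using c1 D10 K20 by auto
  show ?thesis unfolding Dn_def[symmetric] D1_def[symmetric] K2_def[symmetric] e
    using p1 by (simp add: field_simps)
qed



lemma FC_iff: "p \<in> FC a x \<longleftrightarrow> snd p \<ge> 0 \<and> \<bar>fst p - x\<bar> \<le> snd p * tan a"
  by (cases p) (simp add: FC_def)

lemma FCs_iff: "p \<in> FCs a S \<longleftrightarrow> (\<forall>x\<in>S. p \<in> FC a x)"
  by (simp add: FCs_def)

definition xf :: "real \<Rightarrow> nat \<Rightarrow> real" where
  "xf s i = (if i = 0 then 0 else 2 * (-s)^(i-1))"

lemma adv_seq_alt: "adv_seq s n = map (xf s) [0..<Suc n]"
  by (simp add: adv_seq_def xf_def[abs_def])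

lemma adv_len: "length (adv_seq s n) = Suc n"
  by (simp add: adv_seq_alt)

lemma adv_take: "i \<le> n \<Longrightarrow> take (Suc i) (adv_seq s n) = adv_seq s i"
  by (simp add: adv_seq_alt take_map del: upt_Suc)

lemma adv_set: "set (adv_seq s n) = xf s ` {0..<Suc n}"
  by (simp add: adv_seq_alt del: upt_Suc)

lemma adv_mem: "j \<le> n \<Longrightarrow> xf s j \<in> set (adv_seq s n)"
  by (simp add: adv_set)

lemma adv_nth0: "adv_seq s n ! 0 = 0"
  by (simp add: adv_seq_alt nth_map xf_def del: upt_Suc)

lemma adv_input: "n \<ge> 1 \<Longrightarrow> is_input (adv_seq s n)"
  by (simp add: is_input_def adv_len adv_nth0)

lemma path_cost_nonneg: "path_cost P n \<ge> 0"
  by (simp add: path_cost_def edist_def sum_nonneg)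

lemma OPT_le: "is_solution \<alpha> xs Q \<Longrightarrow> OPT \<alpha> xs \<le> path_cost Q (length xs - 1)"
  unfolding OPT_def
  by (rule cInf_lower) (auto intro: bdd_belowI[where m=0] simp: path_cost_nonneg)

lemma alg_solution:
  assumes A: "online_alg \<alpha> A" and xs: "is_input xs"
  shows "is_solution \<alpha> xs (alg_pos A xs)"
  unfolding is_solution_def
proof (intro conjI allI impI)
  show "alg_pos A xs 0 = (0, 0)" by (simp add: alg_pos_def)
  fix i assume i: "i < length xs"
  show "alg_pos A xs i \<in> FCs \<alpha> (set (take (Suc i) xs))"
  proof (cases "i = 0")
    case True
    obtain y ys where xy: "xs = y # ys" using xs by (cases xs) (auto simp: is_input_def)
    have "y = 0" using xs xy by (simp add: is_input_def)
    thus ?thesis using True xy by (simp add: alg_pos_def FCs_iff FC_iff)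
  next
    case False
    have "is_input (take (Suc i) xs)" using xs i False by (auto simp: is_input_def)
    thus ?thesis using A False by (simp add: alg_pos_def online_alg_def)
  qed
qed

lemma ALG_ge_OPT: "online_alg \<alpha> A \<Longrightarrow> is_input xs \<Longrightarrow> OPT \<alpha> xs \<le> ALG_cost A xs"
  unfolding ALG_cost_def by (rule OPT_le) (rule alg_solution)

lemma OPT1_pos:
  assumes t0: "tan \<alpha> > 0"
  shows "OPT \<alpha> (adv_seq s 1) \<ge> 2 / sqrt (1 + (tan \<alpha>)^2)"
  unfolding OPT_def
proof (rule cInf_greatest)
  have "is_solution \<alpha> (adv_seq s 1) (\<lambda>i. if i = 0 then (0,0) else (1, 1 / tan \<alpha>))"
    unfolding is_solution_def
  proof (intro conjI allI impI)
    fix i assume "i < length (adv_seq s 1)"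
    hence "i = 0 \<or> i = 1" by (auto simp: adv_len less_Suc_eq)
    thus "(if i = 0 then (0,0) else (1::real, 1 / tan \<alpha>)) \<in> FCs \<alpha> (set (take (Suc i) (adv_seq s 1)))"
      using t0 by (auto simp: adv_seq_def FCs_iff FC_iff)
  qed simp
  thus "{path_cost P (length (adv_seq s 1) - 1) |P. is_solution \<alpha> (adv_seq s 1) P} \<noteq> {}" by blast
next
  fix c assume "c \<in> {path_cost P (length (adv_seq s 1) - 1) |P. is_solution \<alpha> (adv_seq s 1) P}"
  then obtain P where P: "is_solution \<alpha> (adv_seq s 1) P" and c: "c = path_cost P 1" by (auto simp: adv_len)
  have P0: "P 0 = (0,0)" using P by (simp add: is_solution_def)
  have "P 1 \<in> FCs \<alpha> (set (take 2 (adv_seq s 1)))" using P unfolding is_solution_def adv_len numeral_2_eq_2 by auto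
  moreover have "take 2 (adv_seq s 1) = adv_seq s 1" by (simp add: adv_len)
  moreover have "xf s 1 \<in> set (adv_seq s 1)" by (rule adv_mem) simp
  ultimately have "P 1 \<in> FC \<alpha> 2" by (auto simp: FCs_iff xf_def)
  hence h: "fst (P 1) + tan \<alpha> * snd (P 1) \<ge> 2" by (auto simp: FC_iff abs_le_iff mult.commute)
  have "2 \<le> 1 * fst (P 1) + tan \<alpha> * snd (P 1)" using h by simp
  also have "\<dots> \<le> sqrt (1^2 + (tan \<alpha>)^2) * sqrt ((fst (P 1))^2 + (snd (P 1))^2)" by (rule cs_ineq)
  finally have "2 \<le> sqrt (1 + (tan \<alpha>)^2) * c" using P0 by (simp add: c path_cost_def edist_def)
  moreover have "sqrt (1 + (tan \<alpha>)^2) > 0" by (simp add: add_pos_nonneg)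
  ultimately show "2 / sqrt (1 + (tan \<alpha>)^2) \<le> c" by (simp add: divide_le_eq mult.commute)
qed

lemma OPT_apex:
  assumes s1: "s > 1" and t0: "tan \<alpha> > 0"
  shows "OPT \<alpha> (adv_seq s (m+2)) \<le> s^m * sqrt ((s-1)^2 + ((s+1)/tan \<alpha>)^2)"
proof -
  define t where "t = tan \<alpha>"
  define Ap where "Ap = ((-1)^(m+1) * s^m * (s-1), s^m * (s+1) / t)"
  define Q where "Q i = (if i = 0 then (0,0) else Ap)" for i :: nat
  have s0: "s > 0" using s1 by simp
  define \<sigma> where "\<sigma> = (-1::real)^(m+1)"
  have abs\<sigma>: "\<bar>\<sigma> * z\<bar> = \<bar>z\<bar>" for z unfolding \<sigma>_def by (simp add: abs_mult power_abs)
  have smpos: "s^m > 0" using s0 by simp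
  have inFC: "Ap \<in> FC \<alpha> (xf s j)" if "j \<le> m+2" for j
  proof -
    have v: "snd Ap * tan \<alpha> = s^m * (s+1)" using t0 by (simp add: Ap_def t_def)
    have fa: "fst Ap = \<sigma> * (s^m * (s-1))" by (simp add: Ap_def \<sigma>_def mult.assoc)
    have "\<bar>\<sigma> * (s^m * (s-1)) - xf s j\<bar> \<le> s^m * (s+1)"
    proof (cases "j = 0")
      case True
      have "\<bar>\<sigma> * (s^m * (s-1)) - xf s j\<bar> = s^m * (s-1)"
        using True abs\<sigma>[of "s^m * (s-1)"] smpos s1 by (simp add: xf_def)
      thus ?thesis using smpos by simp
    next
      case j0: False
      show ?thesis
      proof (cases "j = m+2")
        case True
        have "xf s j = 2 * (-s)^(m+1)" using True by (simp add: xf_def)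
        also have "(-s)^(m+1) = \<sigma> * s^(m+1)" unfolding \<sigma>_def by (rule power_minus)
        finally have "\<sigma> * (s^m * (s-1)) - xf s j = \<sigma> * (- (s^m * (s+1)))"
          by (simp add: algebra_simps)
        hence "\<bar>\<sigma> * (s^m * (s-1)) - xf s j\<bar> = s^m * (s+1)"
          using abs\<sigma>[of "- (s^m * (s+1))"] smpos s1 by simp
        thus ?thesis by simp
      next
        case False
        hence jm: "j - 1 \<le> m" using that j0 by simp
        obtain k where k: "j = Suc k" using j0 by (cases j) auto
        have "\<bar>xf s j\<bar> = 2 * s^k" using k s0 by (simp add: xf_def abs_mult power_abs)
        also have "\<dots> \<le> 2 * s^m" using jm k s1 by (simp add: power_increasing)
        finally have "\<bar>xf s j\<bar> \<le> 2 * s^m" .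
        moreover have "\<bar>\<sigma> * (s^m * (s-1))\<bar> = s^m * (s-1)" using abs\<sigma>[of "s^m * (s-1)"] smpos s1 by simp
        moreover have "\<bar>\<sigma> * (s^m * (s-1)) - xf s j\<bar> \<le> \<bar>\<sigma> * (s^m * (s-1))\<bar> + \<bar>xf s j\<bar>"
          by (rule abs_triangle_ineq4)
        moreover have "s^m*(s-1) + 2*s^m = s^m*(s+1)" by (simp add: algebra_simps)
        ultimately show ?thesis by linarith
      qed
    qed
    moreover have "snd Ap \<ge> 0" using s1 t0 by (simp add: Ap_def t_def)
    ultimately show ?thesis unfolding FC_iff v fa by simp
  qed
  have sol: "is_solution \<alpha> (adv_seq s (m+2)) Q"
    unfolding is_solution_def
  proof (intro conjI allI impI)
    show "Q 0 = (0,0)" by (simp add: Q_def)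
    fix i assume i: "i < length (adv_seq s (m+2))"
    show "Q i \<in> FCs \<alpha> (set (take (Suc i) (adv_seq s (m+2))))"
    proof (cases "i = 0")
      case True
      have "take (Suc 0) (adv_seq s (m+2)) = adv_seq s 0" by (rule adv_take) simp
      thus ?thesis using True by (simp add: Q_def adv_seq_def FCs_iff FC_iff)
    next
      case False
      have "\<forall>x\<in>set (adv_seq s (m+2)). Ap \<in> FC \<alpha> x" using inFC by (auto simp: adv_set)
      hence "\<forall>x\<in>set (take (Suc i) (adv_seq s (m+2))). Ap \<in> FC \<alpha> x" by (meson in_set_takeD)
      thus ?thesis using False by (simp add: Q_def FCs_iff)
    qed
  qed
  have "path_cost Q (m+2) = edist (0,0) Ap"
  proof -
    have QS: "Q (Suc i) = Ap" for i by (simp add: Q_def)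
    have "path_cost Q (Suc (Suc m)) = edist (Q 0) (Q (Suc 0)) + (\<Sum>i<Suc m. edist (Q (Suc i)) (Q (Suc (Suc i))))"
      unfolding path_cost_def by (rule sum.lessThan_Suc_shift)
    also have "(\<Sum>i<Suc m. edist (Q (Suc i)) (Q (Suc (Suc i)))) = 0"
      unfolding QS by (simp add: edist_def)
    finally have "path_cost Q (Suc (Suc m)) = edist (Q 0) (Q (Suc 0))" by simp
    moreover have "Q 0 = (0,0)" "Q (Suc 0) = Ap" by (simp_all add: Q_def)
    ultimately show ?thesis by simp
  qed
  also have "\<dots> = sqrt ((s^m)^2 * ((s-1)^2 + ((s+1)/t)^2))"
  proof -
    have f1: "(0 - fst Ap)^2 = (s^m)^2 * (s-1)^2"
      by (simp add: Ap_def power_mult_distrib neg1_sq)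
    have f2: "(0 - snd Ap)^2 = (s^m)^2 * ((s+1)/t)^2"
    proof -
      have "snd Ap = s^m * ((s+1)/t)" by (simp add: Ap_def)
      hence "(0 - snd Ap)^2 = (s^m * ((s+1)/t))^2" by simp
      thus ?thesis by (simp only: power_mult_distrib)
    qed
    show ?thesis unfolding edist_def fst_conv snd_conv f1 f2 by (simp add: distrib_left)
  qed
  also have "\<dots> = s^m * sqrt ((s-1)^2 + ((s+1)/t)^2)" using s0 by (simp add: real_sqrt_mult)
  finally have "path_cost Q (m+2) = s^m * sqrt ((s-1)^2 + ((s+1)/t)^2)" .
  moreover have "OPT \<alpha> (adv_seq s (m+2)) \<le> path_cost Q (m+2)" using OPT_le[OF sol] by (simp add: adv_len)
  ultimately show ?thesis by (simp add: t_def)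
qed

lemma ALG_eq:
  "ALG_cost A (adv_seq s n) = path_cost (\<lambda>i. if i = 0 then (0,0) else A (adv_seq s i)) n"
  unfolding ALG_cost_def path_cost_def adv_len
  by (intro sum.cong) (auto simp: alg_pos_def adv_take)

theorem theorem4:
  fixes \<alpha> :: real and A :: "real list \<Rightarrow> real \<times> real"
  assumes "0 < \<alpha>" and "\<alpha> \<le> pi / 4" and "online_alg \<alpha> A"
  shows "ereal (rho_star \<alpha>) \<le> comp_ratio A \<alpha>
       \<and> ereal (rho_star \<alpha>) \<le> (SUP n \<in> {1..}. cratio (ALG_cost A (adv_seq (s_star \<alpha>) n))
                                                  (OPT \<alpha> (adv_seq (s_star \<alpha>) n)))"
proof -
  note a0 = assms(1) and a1 = assms(2) and Aok = assms(3)
  define s where "s = s_star \<alpha>"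
  define t where "t = tan \<alpha>"
  define c where "c = cos (4*\<alpha>)"
  have t0: "t > 0" using trig_facts(1)[OF a0 a1] by (simp add: t_def)
  have cform: "c = 1 - 8*t^2/(1+t^2)^2" using trig_facts(2)[OF a0 a1] by (simp add: c_def t_def)
  have cb: "c < 1" "-1 \<le> c" using trig_facts(4,5)[OF a0 a1] by (auto simp: c_def)
  have rho_def': "rho_star \<alpha> = s*(1+s)*sqrt(1-c)/sqrt(2*(1+s^4) - 4*s^2*c)"
    by (simp add: rho_star_def Let_def s_def c_def)
  define f where "f n = cratio (ALG_cost A (adv_seq s n)) (OPT \<alpha> (adv_seq s n))" for n
  define Sup where "Sup = (SUP n\<in>{1::nat..}. f n)"
  have ALG0: "ALG_cost A xs \<ge> 0" for xs by (simp add: ALG_cost_def path_cost_nonneg)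
  have f0: "f n \<ge> 0" for n
    using ALG0[of "adv_seq s n"] by (simp add: f_def cratio_def)
  have fSup: "f n \<le> Sup" if "n \<ge> 1" for n
    unfolding Sup_def using that by (intro SUP_upper) auto
  have part2: "ereal (rho_star \<alpha>) \<le> Sup"
  proof (cases "s > 1")
    case False
    have "s \<ge> -1" using s_star_ge[OF a0 a1] by (simp add: s_def)
    hence rle: "rho_star \<alpha> \<le> 1" unfolding rho_def' using False cb by (intro rho_le1) auto
    have O1: "OPT \<alpha> (adv_seq s 1) > 0"
    proof -
      have "2 / sqrt (1 + (tan \<alpha>)^2) > 0" by (simp add: add_pos_nonneg)
      moreover have "2 / sqrt (1 + (tan \<alpha>)^2) \<le> OPT \<alpha> (adv_seq s 1)" using OPT1_pos[of \<alpha> s] t0 t_def by simp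
      ultimately show ?thesis by linarith
    qed
    have AO: "OPT \<alpha> (adv_seq s 1) \<le> ALG_cost A (adv_seq s 1)"
      by (rule ALG_ge_OPT[OF Aok adv_input]) simp
    have "f 1 \<ge> 1" using O1 AO by (simp add: f_def cratio_def)
    hence "ereal 1 \<le> f 1" by (simp add: one_ereal_def)
    hence "ereal 1 \<le> Sup" using fSup[of 1] by (rule order_trans) simp
    moreover have "ereal (rho_star \<alpha>) \<le> ereal 1" using rle by simp
    ultimately show ?thesis by (rule order_trans[rotated])
  next
    case True
    have s1: "s > 1" using True .
    have s0: "s > 0" using s1 by simp
    show ?thesis
    proof (rule ccontr)
      assume "\<not> ereal (rho_star \<alpha>) \<le> Sup"
      hence "Sup < ereal (rho_star \<alpha>)" by simp
      then obtain \<rho> where r1: "Sup < ereal \<rho>" and r2: "ereal \<rho> < ereal (rho_star \<alpha>)"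
        using ereal_dense2 by blast
      have rr: "\<rho> < rho_star \<alpha>" using r2 by simp
      have "0 \<le> Sup" using f0[of 1] fSup[of 1] by (rule order_trans) simp
      hence "0 < ereal \<rho>" using r1 by (rule le_less_trans)
      hence \<rho>0: "\<rho> \<ge> 0" by simp
      define P where "P i = (if i = 0 then (0,0) else A (adv_seq s i))" for i
      define u where "u i = fst (P i)" for i
      define v where "v i = snd (P i)" for i
      define d where "d n = (\<Sum>i<n. sqrt ((u i - u (Suc i))^2 + (v i - v (Suc i))^2))" for n
      define K where "K = sqrt ((s-1)^2 + ((s+1)/t)^2)"
      have K0: "K > 0" unfolding K_def using s1 by (simp add: add_pos_nonneg)
      have dALG: "ALG_cost A (adv_seq s n) = d n" for n
        unfolding ALG_eq d_def path_cost_def edist_def u_def v_def P_def by simp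
      have bound: "d (m+2) \<le> \<rho> * s^m * K" for m
      proof -
        have fl: "f (m+2) < ereal \<rho>" using fSup[of "m+2"] r1 by simp
        have OB: "OPT \<alpha> (adv_seq s (m+2)) \<le> s^m * K"
          using OPT_apex[OF s1, of \<alpha> m] t0 by (simp add: K_def t_def)
        show ?thesis
        proof (cases "OPT \<alpha> (adv_seq s (m+2)) > 0")
          case True
          hence "d (m+2) / OPT \<alpha> (adv_seq s (m+2)) < \<rho>" using fl by (simp add: f_def cratio_def dALG)
          hence "d (m+2) < \<rho> * OPT \<alpha> (adv_seq s (m+2))" using True by (simp add: divide_less_eq mult.commute)
          also have "\<dots> \<le> \<rho> * (s^m * K)" using OB \<rho>0 by (intro mult_left_mono) auto
          finally show ?thesis by (simp add: mult.assoc)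
        next
          case False
          hence "\<not> d (m+2) > 0" using fl by (auto simp: f_def cratio_def dALG)
          moreover have "\<rho> * s^m * K \<ge> 0" using \<rho>0 s0 K0 by simp
          ultimately show ?thesis by simp
        qed
      qed
      have feas: "P (Suc j) \<in> FC \<alpha> x" if "x \<in> set (adv_seq s (Suc j))" for j x
      proof -
        have "A (adv_seq s (Suc j)) \<in> FCs \<alpha> (set (adv_seq s (Suc j)))"
          using Aok adv_input[of "Suc j" s] by (simp add: online_alg_def)
        thus ?thesis using that by (simp add: P_def FCs_iff)
      qed
      have sgn: "(-1::real)^j * (-s)^j = s^j" for j
      proof -
        have "(-1::real)^j * (-s)^j = ((-1) * (-s))^j" by (rule power_mult_distrib[symmetric])
        thus ?thesis by simp
      qed
      have C1: "(-1)^j * u (Suc j) + t * v (Suc j) \<ge> 2 * s^j" for j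
      proof -
        have "P (Suc j) \<in> FC \<alpha> (xf s (Suc j))" by (rule feas, rule adv_mem) simp
        hence h: "\<bar>u (Suc j) - 2 * (-s)^j\<bar> \<le> v (Suc j) * t" by (simp add: FC_iff u_def v_def t_def xf_def)
        have "\<bar>(-1)^j * (u (Suc j) - 2 * (-s)^j)\<bar> = \<bar>u (Suc j) - 2 * (-s)^j\<bar>" by (simp add: abs_mult power_abs)
        hence "(-1)^j * (u (Suc j) - 2 * (-s)^j) \<ge> - (v (Suc j) * t)" using h by linarith
        moreover have "(-1)^j * (u (Suc j) - 2 * (-s)^j) = (-1)^j * u (Suc j) - 2 * s^j"
          using sgn[of j] by (simp add: algebra_simps)
        ultimately show ?thesis by (simp add: algebra_simps)
      qed
      have C2: "(-1)^j * u (Suc j) \<le> t * v (Suc j)" for j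
      proof -
        have "P (Suc j) \<in> FC \<alpha> (xf s 0)" by (rule feas, rule adv_mem) simp
        hence h: "\<bar>u (Suc j)\<bar> \<le> v (Suc j) * t" by (simp add: FC_iff u_def v_def t_def xf_def)
        have "(-1)^j * u (Suc j) \<le> \<bar>(-1)^j * u (Suc j)\<bar>" by simp
        also have "\<dots> = \<bar>u (Suc j)\<bar>" by (simp add: abs_mult power_abs)
        finally show ?thesis using h by (simp add: mult.commute)
      qed
      have u0: "u 0 = 0" and v0: "v 0 = 0" by (simp_all add: u_def v_def P_def)
      have cert: "2 * s * (s+1) \<le> \<rho> * sqrt ((s-1)^2 + t^2*(s+1)^2) * K"
        by (rule certificate[OF s1 t0 K0 C1 C2 u0 v0 d_def bound])
      have req: "rho_star \<alpha> = 2*s*(s+1)/(sqrt ((s-1)^2 + t^2*(s+1)^2) * K)"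
        unfolding rho_def' K_def by (rule rho_eq[OF s1 t0 cform])
      have D0: "sqrt ((s-1)^2 + t^2*(s+1)^2) * K > 0" using s1 K0 by (simp add: add_pos_nonneg)
      have "\<rho> * (sqrt ((s-1)^2 + t^2*(s+1)^2) * K) < 2*s*(s+1)"
        using rr D0 unfolding req by (simp add: less_divide_eq)
      thus False using cert by (simp add: mult.assoc)
    qed
  qed
  have part1: "Sup \<le> comp_ratio A \<alpha>"
    unfolding Sup_def comp_ratio_def f_def
    by (rule SUP_least, rule SUP_upper) (auto intro: adv_input)
  have "ereal (rho_star \<alpha>) \<le> comp_ratio A \<alpha>" using part2 part1 by (rule order_trans)
  moreover have "ereal (rho_star \<alpha>) \<le> (SUP n \<in> {1..}. cratio (ALG_cost A (adv_seq (s_star \<alpha>) n))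
                                                  (OPT \<alpha> (adv_seq (s_star \<alpha>) n)))"
    using part2 unfolding Sup_def f_def s_def .
  ultimately show ?thesis ..
qed

end
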